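(* Let $P$ be an Eulerian poset and $I\subset P$ a proper ideal. Then $\mathrm{Bier}(P,I)$ is an Eulerian poset.
   Context: A graded poset (bounded, all maximal chains of equal length) is Eulerian if every interval $[x,y]$ with $x<y$ contains equally many elements of odd rank and of even rank. A proper ideal $I$ of $P$ is a nonempty down-closed subset different from $P$. The Bier poset $\mathrm{Bier}(P,I)$ consists of all intervals $[x,y]$ of $P$ with $x\in I$, $y\notin I$, ordered by reversed inclusion ($[x',y']\le[x,y]$ iff $x'\le x<y\le y'$), together with an additional top element $\hat1$. *)

theory Defs
  imports Main
begin

definition is_poset :: "'a set \<Rightarrow> ('a \<Rightarrow> 'a \<Rightarrow> bool) \<Rightarrow> bool" where
  "is_poset P le \<longleftrightarrow>
     (\<forall>x\<in>P. le x x) \<and>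
     (\<forall>x\<in>P. \<forall>y\<in>P. le x y \<and> le y x \<longrightarrow> x = y) \<and>
     (\<forall>x\<in>P. \<forall>y\<in>P. \<forall>z\<in>P. le x y \<and> le y z \<longrightarrow> le x z)"

definition is_chain :: "'a set \<Rightarrow> ('a \<Rightarrow> 'a \<Rightarrow> bool) \<Rightarrow> 'a set \<Rightarrow> bool" where
  "is_chain P le C \<longleftrightarrow> C \<subseteq> P \<and> (\<forall>x\<in>C. \<forall>y\<in>C. le x y \<or> le y x)"

definition maximal_chain :: "'a set \<Rightarrow> ('a \<Rightarrow> 'a \<Rightarrow> bool) \<Rightarrow> 'a set \<Rightarrow> bool" where
  "maximal_chain P le C \<longleftrightarrow>
     is_chain P le C \<and> (\<forall>D. is_chain P le D \<and> C \<subseteq> D \<longrightarrow> D = C)"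

definition is_bounded :: "'a set \<Rightarrow> ('a \<Rightarrow> 'a \<Rightarrow> bool) \<Rightarrow> bool" where
  "is_bounded P le \<longleftrightarrow> (\<exists>b\<in>P. \<exists>t\<in>P. \<forall>x\<in>P. le b x \<and> le x t)"

definition graded :: "'a set \<Rightarrow> ('a \<Rightarrow> 'a \<Rightarrow> bool) \<Rightarrow> bool" where
  "graded P le \<longleftrightarrow> finite P \<and> is_poset P le \<and> is_bounded P le \<and>
     (\<forall>C D. maximal_chain P le C \<and> maximal_chain P le D \<longrightarrow> card C = card D)"

definition rank :: "'a set \<Rightarrow> ('a \<Rightarrow> 'a \<Rightarrow> bool) \<Rightarrow> 'a \<Rightarrow> nat" where
  "rank P le z = Max {card C | C. is_chain P le C \<and> (\<forall>c\<in>C. le c z)} - 1"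

definition closed_interval :: "'a set \<Rightarrow> ('a \<Rightarrow> 'a \<Rightarrow> bool) \<Rightarrow> 'a \<Rightarrow> 'a \<Rightarrow> 'a set" where
  "closed_interval P le x y = {z\<in>P. le x z \<and> le z y}"

definition eulerian :: "'a set \<Rightarrow> ('a \<Rightarrow> 'a \<Rightarrow> bool) \<Rightarrow> bool" where
  "eulerian P le \<longleftrightarrow> graded P le \<and>
     (\<forall>x\<in>P. \<forall>y\<in>P. le x y \<and> x \<noteq> y \<longrightarrow>
        card {z \<in> closed_interval P le x y. even (rank P le z)} =
        card {z \<in> closed_interval P le x y. odd (rank P le z)})"

definition proper_ideal :: "'a set \<Rightarrow> ('a \<Rightarrow> 'a \<Rightarrow> bool) \<Rightarrow> 'a set \<Rightarrow> bool" where
  "proper_ideal P le I \<longleftrightarrow> I \<subseteq> P \<and> I \<noteq> {} \<and> I \<noteq> P \<and>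
     (\<forall>x\<in>I. \<forall>y\<in>P. le y x \<longrightarrow> y \<in> I)"

text \<open>Bier poset: the interval [x,y] is encoded as Some (x,y); the extra top element is None.\<close>
definition bier_carrier :: "'a set \<Rightarrow> ('a \<Rightarrow> 'a \<Rightarrow> bool) \<Rightarrow> 'a set \<Rightarrow> ('a \<times> 'a) option set" where
  "bier_carrier P le I =
     insert None {Some (x, y) | x y. x \<in> I \<and> y \<in> P \<and> y \<notin> I \<and> le x y}"

definition bier_le :: "('a \<Rightarrow> 'a \<Rightarrow> bool) \<Rightarrow> ('a \<times> 'a) option \<Rightarrow> ('a \<times> 'a) option \<Rightarrow> bool" where
  "bier_le le a b = (case b of
       None \<Rightarrow> True
     | Some (x, y) \<Rightarrow> (case a of
          None \<Rightarrow> False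
        | Some (x', y') \<Rightarrow> le x' x \<and> le y y'))"

end

theory Submission
  imports Defs
begin


lemma chain_subset: "is_chain P le D \<Longrightarrow> A \<subseteq> D \<Longrightarrow> is_chain P le A"
  unfolding is_chain_def by blast

lemma chain_union: "is_chain P le A \<Longrightarrow> is_chain P le B \<Longrightarrow> \<forall>a\<in>A. \<forall>b\<in>B. le a b \<Longrightarrow> is_chain P le (A \<union> B)"
  unfolding is_chain_def by blast

lemma card_even_odd:
  assumes "finite S"
  shows "(\<Sum>z\<in>S. (-1::int)^(g z)) = int (card {z\<in>S. even (g z)}) - int (card {z\<in>S. odd (g z)})"
proof -
  have S: "S = {z\<in>S. even (g z)} \<union> {z\<in>S. odd (g z)}" by auto
  have "(\<Sum>z\<in>S. (-1::int)^(g z)) = (\<Sum>z\<in>{z\<in>S. even (g z)}. (-1::int)^(g z)) + (\<Sum>z\<in>{z\<in>S. odd (g z)}. (-1::int)^(g z))"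
    by (subst S, rule sum.union_disjoint) (use assms in auto)
  also have "\<dots> = (\<Sum>z\<in>{z\<in>S. even (g z)}. 1) + (\<Sum>z\<in>{z\<in>S. odd (g z)}. -1)"
    by (intro arg_cong2[where f="(+)"] sum.cong) auto
  finally show ?thesis by simp
qed

locale fposet =
  fixes P :: "'a set" and le :: "'a \<Rightarrow> 'a \<Rightarrow> bool"
  assumes fin: "finite P" and po: "is_poset P le"
begin

lemma rfl: "x \<in> P \<Longrightarrow> le x x" using po unfolding is_poset_def by blast
lemma asym: "x \<in> P \<Longrightarrow> y \<in> P \<Longrightarrow> le x y \<Longrightarrow> le y x \<Longrightarrow> x = y" using po unfolding is_poset_def by blast
lemma trn: "x \<in> P \<Longrightarrow> y \<in> P \<Longrightarrow> z \<in> P \<Longrightarrow> le x y \<Longrightarrow> le y z \<Longrightarrow> le x z" using po unfolding is_poset_def by blast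

definition covers where "covers x y \<longleftrightarrow> x \<in> P \<and> y \<in> P \<and> le x y \<and> x \<noteq> y \<and> (\<forall>w\<in>P. le x w \<and> le w y \<longrightarrow> w = x \<or> w = y)"

lemma maximal_ex:
  assumes "finite A" "A \<noteq> {}" "A \<subseteq> P"
  shows "\<exists>m\<in>A. \<forall>a\<in>A. le m a \<longrightarrow> a = m"
  using assms
proof (induction A rule: finite_ne_induct)
  case (singleton x) then show ?case by auto
next
  case (insert x F)
  then obtain m where m: "m\<in>F" "\<forall>a\<in>F. le m a \<longrightarrow> a = m" by auto
  show ?case
  proof (cases "le m x \<and> x \<noteq> m")
    case True
    have "\<forall>a\<in>insert x F. le x a \<longrightarrow> a = x"
    proof (intro ballI impI)
      fix a assume a: "a \<in> insert x F" "le x a"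
      show "a = x"
      proof (cases "a = x")
        case False
        then have "a \<in> F" using a by auto
        then have "le m a" using trn[of m x a] True a insert.prems m by auto
        then have "a = m" using m \<open>a\<in>F\<close> by auto
        then show ?thesis using asym[of x m] True a insert.prems m(1) by auto
      qed
    qed
    then show ?thesis by auto
  next
    case False
    then show ?thesis using m by auto
  qed
qed

lemma chain_greatest:
  assumes "is_chain P le C" "C \<noteq> {}"
  shows "\<exists>m\<in>C. \<forall>c\<in>C. le c m"
proof -
  have CP: "C \<subseteq> P" using assms unfolding is_chain_def by auto
  then have "finite C" using fin finite_subset by blast
  then obtain m where m: "m\<in>C" "\<forall>a\<in>C. le m a \<longrightarrow> a = m" using maximal_ex[of C] assms CP by auto
  have "\<forall>c\<in>C. le c m"
  proof
    fix c assume c: "c \<in> C"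
    then have "le c m \<or> le m c" using assms m unfolding is_chain_def by auto
    then show "le c m" using m c rfl CP by auto
  qed
  then show ?thesis using m by auto
qed

lemma longest_ex:
  assumes "Q \<subseteq> P"
  shows "\<exists>C. is_chain P le C \<and> C \<subseteq> Q \<and> (\<forall>D. is_chain P le D \<and> D \<subseteq> Q \<longrightarrow> card D \<le> card C)"
proof -
  let ?Cs = "{C. is_chain P le C \<and> C \<subseteq> Q}"
  have f: "finite ?Cs" using fin assms by (auto intro: finite_subset[of _ "Pow P"])
  have "{} \<in> ?Cs" by (simp add: is_chain_def)
  then have "Max (card ` ?Cs) \<in> card ` ?Cs" using f by (intro Max_in) auto
  then obtain C where C: "C \<in> ?Cs" "card C = Max (card ` ?Cs)" by auto
  have "\<forall>D. is_chain P le D \<and> D \<subseteq> Q \<longrightarrow> card D \<le> card C"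
    using C f by auto
  then show ?thesis using C by auto
qed

lemma longest_mem:
  assumes "is_chain P le L" "L \<subseteq> Q" "\<forall>D. is_chain P le D \<and> D \<subseteq> Q \<longrightarrow> card D \<le> card L"
    "w \<in> Q" "is_chain P le (insert w L)"
  shows "w \<in> L"
proof (rule ccontr)
  assume "w \<notin> L"
  have "finite L" using assms(1) fin finite_subset unfolding is_chain_def by blast
  then have "card (insert w L) = Suc (card L)" using \<open>w \<notin> L\<close> by simp
  moreover have "card (insert w L) \<le> card L" using assms by auto
  ultimately show False by simp
qed

lemma rank_longest:
  assumes "z \<in> P" "is_chain P le L" "L \<subseteq> {w\<in>P. le w z}"
    "\<forall>D. is_chain P le D \<and> D \<subseteq> {w\<in>P. le w z} \<longrightarrow> card D \<le> card L"
  shows "rank P le z = card L - 1"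
proof -
  let ?S = "{card C | C. is_chain P le C \<and> (\<forall>c\<in>C. le c z)}"
  have S: "?S \<subseteq> card ` Pow P" unfolding is_chain_def by auto
  have "Max ?S = card L"
  proof (rule Max_eqI)
    show "finite ?S" using S fin finite_subset by blast
    show "card L \<in> ?S" using assms by auto
    fix y assume "y \<in> ?S"
    then obtain C where "y = card C" "is_chain P le C" "\<forall>c\<in>C. le c z" by auto
    moreover then have "C \<subseteq> {w\<in>P. le w z}" unfolding is_chain_def by auto
    ultimately show "y \<le> card L" using assms by auto
  qed
  then show ?thesis unfolding rank_def by simp
qed

lemma rank_mono:
  assumes "u \<in> P" "v \<in> P" "le u v"
  shows "rank P le u \<le> rank P le v"
proof -
  let ?S = "\<lambda>z. {card C | C. is_chain P le C \<and> (\<forall>c\<in>C. le c z)}"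
  have S: "?S v \<subseteq> card ` Pow P" unfolding is_chain_def by auto
  have sub: "?S u \<subseteq> ?S v"
  proof
    fix k assume "k \<in> ?S u"
    then obtain C where "k = card C" "is_chain P le C" "\<forall>c\<in>C. le c u" by auto
    moreover then have "\<forall>c\<in>C. le c v" using trn[of _ u v] assms unfolding is_chain_def by blast
    ultimately show "k \<in> ?S v" by auto
  qed
  have ne: "?S u \<noteq> {}" using is_chain_def by fastforce
  have "Max (?S u) \<le> Max (?S v)"
    using Max_mono[OF sub ne] S fin finite_subset by blast
  then show ?thesis unfolding rank_def by simp
qed

lemma rank_bot:
  assumes "b \<in> P" "\<forall>x\<in>P. le b x"
  shows "rank P le b = 0"
proof -
  have "rank P le b = card {b} - 1"
  proof (rule rank_longest)
    show "is_chain P le {b}" using assms rfl unfolding is_chain_def by auto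
    show "{b} \<subseteq> {w \<in> P. le w b}" using assms rfl by auto
    show "\<forall>D. is_chain P le D \<and> D \<subseteq> {w \<in> P. le w b} \<longrightarrow> card D \<le> card {b}"
    proof (intro allI impI)
      fix D assume "is_chain P le D \<and> D \<subseteq> {w \<in> P. le w b}"
      then have "D \<subseteq> {b}" using assms asym by auto
      then show "card D \<le> card {b}" by (intro card_mono) auto
    qed
  qed (use assms in auto)
  then show ?thesis by simp
qed


context
  fixes b :: 'a and r :: "'a \<Rightarrow> nat"
  assumes bP: "b \<in> P" and bbot: "\<forall>x\<in>P. le b x"
    and r0: "r b = 0" and rc: "\<forall>x y. covers x y \<longrightarrow> r y = Suc (r x)"
begin

lemma chain_le_r:
  assumes "z \<in> P" "is_chain P le C" "\<forall>c\<in>C. le c z"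
  shows "card C \<le> Suc (r z)"
  using assms
proof (induction "r z" arbitrary: z C rule: less_induct)
  case less
  show ?case
  proof (cases "C \<subseteq> {z}")
    case True then show ?thesis using card_mono[of "{z}" C] by auto
  next
    case False
    let ?C' = "C - {z}"
    have CP: "C \<subseteq> P" using less.prems unfolding is_chain_def by auto
    have ne: "?C' \<noteq> {}" using False by auto
    have ch': "is_chain P le ?C'" using less.prems unfolding is_chain_def by auto
    obtain m where m: "m \<in> ?C'" "\<forall>c\<in>?C'. le c m" using chain_greatest[OF ch' ne] by auto
    let ?A = "{w\<in>P. le m w \<and> le w (z::'a) \<and> w \<noteq> z}"
    have mA: "m \<in> ?A" using m CP less.prems rfl by auto
    obtain w where w: "w \<in> ?A" "\<forall>a\<in>?A. le w a \<longrightarrow> a = w"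
      using maximal_ex[of ?A] fin mA by auto
    have cov: "covers w z" unfolding covers_def
    proof (intro conjI ballI impI)
      fix v assume v: "v \<in> P" "le w v \<and> le v z"
      show "v = w \<or> v = z"
      proof (cases "v = z")
        case False
        have "le m v" using trn[of m w v] w v CP m by auto
        then show ?thesis using w v False by auto
      qed simp
    qed (use w less.prems in auto)
    have rz: "r z = Suc (r w)" using rc cov by auto
    have "\<forall>c\<in>?C'. le c w" using m w trn[of _ m w] CP by blast
    then have c1: "card ?C' \<le> Suc (r w)" using less.hyps[of w ?C'] rz w ch' by auto
    have fC: "finite C" using finite_subset[OF CP fin] .
    have "card C \<le> card (insert z ?C')" by (rule card_mono) (use fC in auto)
    also have "\<dots> \<le> Suc (card ?C')" using card_insert_if[of ?C' z] fC by (simp del: card_Diff_insert)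
    finally have "card C \<le> Suc (card ?C')" .
    then show ?thesis using rz c1 by simp
  qed
qed

lemma chain_ex_r:
  assumes "z \<in> P"
  shows "\<exists>C. is_chain P le C \<and> (\<forall>c\<in>C. le c z) \<and> card C = Suc (r z)"
  using assms
proof (induction "r z" arbitrary: z rule: less_induct)
  case less
  show ?case
  proof (cases "z = b")
    case True
    then show ?thesis using r0 bP rfl by (intro exI[of _ "{b}"]) (auto simp: is_chain_def)
  next
    case False
    let ?A = "{w\<in>P. le w z \<and> w \<noteq> z}"
    have bA: "b \<in> ?A" using bP bbot less.prems False by auto
    obtain w where w: "w \<in> ?A" "\<forall>a\<in>?A. le w a \<longrightarrow> a = w"
      using maximal_ex[of ?A] fin bA by auto
    have cov: "covers w z" unfolding covers_def
      using w less.prems trn[of w _ z] by auto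
    have rz: "r z = Suc (r w)" using rc cov by auto
    obtain C where C: "is_chain P le C" "\<forall>c\<in>C. le c w" "card C = Suc (r w)"
      using less.hyps[of w] rz w by auto
    have CP: "C \<subseteq> P" using C unfolding is_chain_def by auto
    have zC: "z \<notin> C" using C w less.prems asym by auto
    have "\<forall>c\<in>C. le c z" using C w trn[of _ w z] CP less.prems by blast
    moreover have "is_chain P le (insert z C)"
      using C(1) \<open>\<forall>c\<in>C. le c z\<close> less.prems rfl unfolding is_chain_def by auto
    moreover have "card (insert z C) = Suc (r z)"
      using zC C(3) finite_subset[OF CP fin] rz by simp
    ultimately show ?thesis using rfl less.prems by (intro exI[of _ "insert z C"]) auto
  qed
qed

lemma rank_eq_r:
  assumes "z \<in> P"
  shows "rank P le z = r z"
proof -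
  let ?S = "{card C | C. is_chain P le C \<and> (\<forall>c\<in>C. le c z)}"
  have S: "?S \<subseteq> card ` Pow P" unfolding is_chain_def by auto
  have "Max ?S = Suc (r z)"
  proof (rule Max_eqI)
    show "finite ?S" using S fin finite_subset by blast
    obtain C where C: "is_chain P le C" "\<forall>c\<in>C. le c z" "card C = Suc (r z)"
      using chain_ex_r[OF assms] by blast
    show "Suc (r z) \<in> ?S" using C by (intro CollectI exI[of _ C]) simp
    fix y assume "y \<in> ?S"
    then obtain D where D: "y = card D" "is_chain P le D" "\<forall>c\<in>D. le c z" by blast
    show "y \<le> Suc (r z)" using chain_le_r[OF assms D(2,3)] D(1) by simp
  qed
  then show ?thesis unfolding rank_def by simp
qed

lemma maxchain_card_r:
  assumes tP: "t \<in> P" and ttop: "\<forall>x\<in>P. le x t" and mc: "maximal_chain P le C"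
  shows "card C = Suc (r t)"
proof -
  have ch: "is_chain P le C" and mx: "\<forall>D. is_chain P le D \<and> C \<subseteq> D \<longrightarrow> D = C"
    using mc unfolding maximal_chain_def by auto
  have CP: "C \<subseteq> P" using ch unfolding is_chain_def by auto
  have ins: "w \<in> C" if "w \<in> P" "\<forall>c\<in>C. le c w \<or> le w c" for w
  proof -
    have "is_chain P le (insert w C)" using ch rfl that unfolding is_chain_def by auto
    then have "insert w C = C" using mx by auto
    then show "w \<in> C" by auto
  qed
  have tC: "t \<in> C" using ins ttop tP CP by auto
  have bC: "b \<in> C" using ins bbot bP CP by auto
  have key: "card {c\<in>C. le c z} = Suc (r z)" if "z \<in> C" for z
    using that
  proof (induction "r z" arbitrary: z rule: less_induct)
    case less
    have zP: "z \<in> P" using less.prems CP by auto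
    show ?case
    proof (cases "z = b")
      case True
      have "{c\<in>C. le c z} = {b}" using True bC CP bbot asym rfl bP by auto
      then show ?thesis using True r0 by simp
    next
      case False
      let ?C' = "{c\<in>C. le c z \<and> c \<noteq> z}"
      have ne: "?C' \<noteq> {}" using bC False bbot zP by auto
      have ch': "is_chain P le ?C'" using chain_subset[OF ch] by auto
      obtain m where m: "m \<in> ?C'" "\<forall>c\<in>?C'. le c m" using chain_greatest[OF ch' ne] by auto
      have mP: "m \<in> P" using m CP by auto
      have cov: "covers m z" unfolding covers_def
      proof (intro conjI ballI impI)
        fix w assume w: "w \<in> P" "le m w \<and> le w z"
        show "w = m \<or> w = z"
        proof (rule ccontr)
          assume nw: "\<not> (w = m \<or> w = z)"
          have "\<forall>c\<in>C. le c w \<or> le w c"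
          proof
            fix c assume c: "c \<in> C"
            then have cP: "c \<in> P" using CP by auto
            have "le c z \<or> le z c" using ch c less.prems unfolding is_chain_def by auto
            then show "le c w \<or> le w c"
            proof
              assume "le z c" then show ?thesis using trn[of w z c] w zP cP by auto
            next
              assume czz: "le c z"
              show ?thesis
              proof (cases "c = z")
                case True then show ?thesis using w by auto
              next
                case False
                then have "le c m" using m c czz by auto
                then show ?thesis using trn[of c m w] cP mP w by auto
              qed
            qed
          qed
          then have "w \<in> C" using ins w by auto
          then have "le w m" using m w nw by auto
          then show False using asym[of w m] w mP nw by auto
        qed
      qed (use m mP zP in auto)
      have rz: "r z = Suc (r m)" using rc cov by auto
      have IH: "card {c\<in>C. le c m} = Suc (r m)" using less.hyps[of m] rz m by auto
      have eq: "{c\<in>C. le c z} = insert z {c\<in>C. le c m}"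
        using m less.prems rfl[OF zP] trn[of _ m z] CP mP zP by auto
      have "z \<notin> {c\<in>C. le c m}" using asym[of z m] m zP mP by auto
      moreover have "finite {c\<in>C. le c m}" using finite_subset[OF CP fin] by simp
      ultimately show ?thesis using eq IH rz by simp
    qed
  qed
  have "{c\<in>C. le c t} = C" using ttop CP by auto
  then show ?thesis using key[OF tC] by simp
qed

end

lemma graded_cover:
  assumes eq: "\<forall>C D. maximal_chain P le C \<and> maximal_chain P le D \<longrightarrow> card C = card D"
    and cov: "covers x y"
  shows "rank P le y = Suc (rank P le x)"
proof -
  have xP: "x \<in> P" and yP: "y \<in> P" and xy: "le x y" "x \<noteq> y" using cov covers_def by auto
  obtain Lx where Lx: "is_chain P le Lx" "Lx \<subseteq> {w\<in>P. le w x}"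
     "\<forall>D. is_chain P le D \<and> D \<subseteq> {w\<in>P. le w x} \<longrightarrow> card D \<le> card Lx"
    using longest_ex[of "{w\<in>P. le w x}"] by auto
  obtain Ly where Ly: "is_chain P le Ly" "Ly \<subseteq> {w\<in>P. le w y}"
     "\<forall>D. is_chain P le D \<and> D \<subseteq> {w\<in>P. le w y} \<longrightarrow> card D \<le> card Ly"
    using longest_ex[of "{w\<in>P. le w y}"] by auto
  obtain U where U: "is_chain P le U" "U \<subseteq> {w\<in>P. le y w}"
     "\<forall>D. is_chain P le D \<and> D \<subseteq> {w\<in>P. le y w} \<longrightarrow> card D \<le> card U"
    using longest_ex[of "{w\<in>P. le y w}"] by auto
  have fLx: "finite Lx" and fLy: "finite Ly" and fU: "finite U"
    using finite_subset[OF Lx(2)] finite_subset[OF Ly(2)] finite_subset[OF U(2)] fin by auto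
  have xLx: "x \<in> Lx"
    by (rule longest_mem[OF Lx]) (use Lx xP rfl in \<open>auto simp: is_chain_def\<close>)
  have yLy: "y \<in> Ly"
    by (rule longest_mem[OF Ly]) (use Ly yP rfl in \<open>auto simp: is_chain_def\<close>)
  have yU: "y \<in> U"
    by (rule longest_mem[OF U]) (use U yP rfl in \<open>auto simp: is_chain_def\<close>)
  have mc1: "maximal_chain P le (Lx \<union> U)"
    unfolding maximal_chain_def
  proof (intro conjI allI impI)
    have "\<forall>a\<in>Lx. \<forall>u\<in>U. le a u"
    proof (intro ballI)
      fix a u assume "a \<in> Lx" "u \<in> U"
      then have "le a x" "le y u" "a \<in> P" "u \<in> P" using Lx U by auto
      then show "le a u" using trn[of a x y] trn[of a y u] xP yP xy by blast
    qed
    then show ch1: "is_chain P le (Lx \<union> U)"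
      using chain_union[OF Lx(1) U(1)] by auto
    fix D assume D: "is_chain P le D \<and> Lx \<union> U \<subseteq> D"
    have "D \<subseteq> Lx \<union> U"
    proof
      fix w assume wD: "w \<in> D"
      have wP: "w \<in> P" using D wD unfolding is_chain_def by auto
      have cy: "le y w \<or> le w y" and cx: "le x w \<or> le w x"
        using D wD yU xLx unfolding is_chain_def by blast+
      have chw: "is_chain P le (insert w A)" if "A \<subseteq> Lx \<union> U" for A
        using chain_subset[of P le D "insert w A"] D wD that by auto
      show "w \<in> Lx \<union> U"
      proof (cases "le y w")
        case True
        then have "w \<in> U" using longest_mem[OF U, of w] wP chw[of U] by auto
        then show ?thesis by auto
      next
        case False
        then have wy: "le w y" using cy by auto
        show ?thesis
        proof (cases "le w x")
          case True
          then have "w \<in> Lx" using longest_mem[OF Lx, of w] wP chw[of Lx] by auto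
          then show ?thesis by auto
        next
          case False
          then have "le x w" using cx by auto
          then have "w = x \<or> w = y" using cov wP wy unfolding covers_def by auto
          then show ?thesis using xLx yU by auto
        qed
      qed
    qed
    then show "D = Lx \<union> U" using D by auto
  qed
  have mc2: "maximal_chain P le (Ly \<union> U)"
    unfolding maximal_chain_def
  proof (intro conjI allI impI)
    have "\<forall>a\<in>Ly. \<forall>u\<in>U. le a u"
    proof (intro ballI)
      fix a u assume "a \<in> Ly" "u \<in> U"
      then have "le a y" "le y u" "a \<in> P" "u \<in> P" using Ly U by auto
      then show "le a u" using trn[of a y u] yP by blast
    qed
    then show ch1: "is_chain P le (Ly \<union> U)"
      using chain_union[OF Ly(1) U(1)] by auto
    fix D assume D: "is_chain P le D \<and> Ly \<union> U \<subseteq> D"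
    have "D \<subseteq> Ly \<union> U"
    proof
      fix w assume wD: "w \<in> D"
      have wP: "w \<in> P" using D wD unfolding is_chain_def by auto
      have cy: "le y w \<or> le w y"
        using D wD yU unfolding is_chain_def by blast
      have chw: "is_chain P le (insert w A)" if "A \<subseteq> Ly \<union> U" for A
        using chain_subset[of P le D "insert w A"] D wD that by auto
      show "w \<in> Ly \<union> U"
      proof (cases "le y w")
        case True
        then have "w \<in> U" using longest_mem[OF U, of w] wP chw[of U] by auto
        then show ?thesis by auto
      next
        case False
        then have "w \<in> Ly" using cy longest_mem[OF Ly, of w] wP chw[of Ly] by auto
        then show ?thesis by auto
      qed
    qed
    then show "D = Ly \<union> U" using D by auto
  qed
  have d1: "Lx \<inter> U = {}"
  proof (rule ccontr)
    assume "Lx \<inter> U \<noteq> {}"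
    then obtain e where e: "e \<in> Lx" "e \<in> U" by auto
    then have "le e x" "le y e" "e \<in> P" using Lx U by auto
    then have "le y x" using trn[of y e x] xP yP by auto
    then show False using asym xy xP yP by auto
  qed
  have d2: "Ly \<inter> U = {y}"
  proof
    show "Ly \<inter> U \<subseteq> {y}"
    proof
      fix e assume "e \<in> Ly \<inter> U"
      then have "le e y" "le y e" "e \<in> P" using Ly U by auto
      then show "e \<in> {y}" using asym[of e y] yP by auto
    qed
  qed (use yLy yU in auto)
  have c1: "card (Lx \<union> U) = card Lx + card U" using card_Un_disjoint[OF fLx fU d1] .
  have c2: "card (Ly \<union> U) + 1 = card Ly + card U" using card_Un_Int[OF fLy fU] d2 by simp
  have "card (Lx \<union> U) = card (Ly \<union> U)" using eq mc1 mc2 by blast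
  then have cc: "card Ly = Suc (card Lx)" using c1 c2 by simp
  have "rank P le x = card Lx - 1" using rank_longest[OF xP Lx] .
  moreover have "rank P le y = card Ly - 1" using rank_longest[OF yP Ly] .
  moreover have "card Lx \<ge> 1" using xLx fLx by (simp add: Suc_le_eq card_gt_0_iff) blast
  ultimately show ?thesis using cc by simp
qed

end


lemma sign_shift:
  assumes "v \<le> n"
  shows "(-1::int)^(a + (n - v)) = (-1)^n * ((-1)^a * (-1)^v)"
proof -
  obtain k where n: "n = v + k" using assms le_Suc_ex by blast
  have vv: "(-1::int)^v * (-1)^v = 1" by (simp add: power_add[symmetric])
  have "(-1::int)^(a + (n - v)) = (-1)^(a+k)" using n by simp
  also have "\<dots> = (-1)^(a+k) * ((-1)^v * (-1)^v)" using vv by simp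
  also have "\<dots> = (-1)^n * ((-1)^a * (-1)^v)" using n by (simp add: power_add algebra_simps)
  finally show ?thesis .
qed

lemma double_sum_if:
  assumes "finite P" "A \<subseteq> P" "\<forall>u\<in>A. C u \<subseteq> P"
  shows "(\<Sum>u\<in>A. \<Sum>v\<in>C u. h u v) = (\<Sum>u\<in>P. \<Sum>v\<in>P. if u\<in>A \<and> v\<in>C u then h u v else (0::int))"
proof -
  have "(\<Sum>u\<in>P. \<Sum>v\<in>P. if u\<in>A \<and> v\<in>C u then h u v else 0) = (\<Sum>u\<in>P. if u\<in>A then (\<Sum>v\<in>C u. h u v) else 0)"
  proof (rule sum.cong[OF refl])
    fix u assume "u\<in>P"
    show "(\<Sum>v\<in>P. if u\<in>A \<and> v\<in>C u then h u v else 0) = (if u\<in>A then (\<Sum>v\<in>C u. h u v) else 0)"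
    proof (cases "u\<in>A")
      case True
      then have "C u = {v\<in>P. v \<in> C u}" using assms by auto
      then show ?thesis using True sum.inter_filter[OF assms(1), of "h u" "\<lambda>v. v\<in>C u"] by simp
    qed simp
  qed
  also have "\<dots> = (\<Sum>u\<in>{u\<in>P. u\<in>A}. \<Sum>v\<in>C u. h u v)"
    using sum.inter_filter[OF assms(1), of "\<lambda>u. \<Sum>v\<in>C u. h u v" "\<lambda>u. u\<in>A"] by simp
  also have "{u\<in>P. u\<in>A} = A" using assms by auto
  finally show ?thesis by simp
qed



theorem theorem6:
  fixes P :: "'a set" and le :: "'a \<Rightarrow> 'a \<Rightarrow> bool" and I :: "'a set"
  assumes "eulerian P le"
    and "proper_ideal P le I"
  shows "eulerian (bier_carrier P le I) (bier_le le)"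
proof -
  from assms(1) have gr: "graded P le" and eulc: "\<forall>x\<in>P. \<forall>y\<in>P. le x y \<and> x \<noteq> y \<longrightarrow>
        card {z \<in> closed_interval P le x y. even (rank P le z)} =
        card {z \<in> closed_interval P le x y. odd (rank P le z)}"
    unfolding eulerian_def by auto
  from gr have finP: "finite P" and poP: "is_poset P le" and bd: "is_bounded P le"
    and eqc: "\<forall>C D. maximal_chain P le C \<and> maximal_chain P le D \<longrightarrow> card C = card D"
    unfolding graded_def by auto
  interpret fposet P le using finP poP by unfold_locales
  obtain b t where bP: "b\<in>P" and tP: "t\<in>P" and bt: "\<forall>x\<in>P. le b x \<and> le x t"
    using bd unfolding is_bounded_def by auto
  from assms(2) have IP: "I \<subseteq> P" and Ine: "I \<noteq> {}" and IneP: "I \<noteq> P"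
    and Idown: "\<forall>x\<in>I. \<forall>y\<in>P. le y x \<longrightarrow> y \<in> I" unfolding proper_ideal_def by auto
  have bI: "b \<in> I"
  proof -
    obtain i where "i \<in> I" using Ine by auto
    then show ?thesis using Idown bt bP IP by auto
  qed
  have tI: "t \<notin> I"
  proof
    assume "t \<in> I"
    then have "P \<subseteq> I" using Idown bt by auto
    then show False using IP IneP by auto
  qed
  define n where "n = rank P le t"
  define f where "f = (\<lambda>z. (-1::int)^(rank P le z))"
  have rb: "rank P le b = 0" using rank_bot bP bt by auto
  have rle: "rank P le v \<le> n" if "v\<in>P" for v using rank_mono[of v t] tP bt that n_def by auto
  have rcov: "rank P le y = Suc (rank P le x)" if "covers x y" for x y
    using graded_cover eqc that by auto
  have eulP: "(\<Sum>z\<in>closed_interval P le x y. f z) = 0" if "x\<in>P" "y\<in>P" "le x y" "x\<noteq>y" for x y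
  proof -
    have fin: "finite (closed_interval P le x y)" using finP unfolding closed_interval_def by simp
    show ?thesis using card_even_odd[OF fin, of "rank P le"] eulc that unfolding f_def by simp
  qed
  have sumci: "(\<Sum>z\<in>closed_interval P le x y. f z) = (if x = y then f x else 0)" if "x\<in>P" "y\<in>P" for x y
  proof (cases "le x y")
    case True
    show ?thesis
    proof (cases "x = y")
      case True
      then have "closed_interval P le x y = {x}" using that asym rfl unfolding closed_interval_def by auto
      then show ?thesis using True by simp
    qed (use eulP that True in auto)
  next
    case False
    then have "closed_interval P le x y = {}" using that trn[of x _ y] unfolding closed_interval_def by auto
    then show ?thesis using False rfl that by auto
  qed
  have ff: "f x * f x = 1" for x unfolding f_def by (simp add: power_add[symmetric])
  define B where "B = bier_carrier P le I"
  define lB where "lB = bier_le le"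
  have Bsub: "B \<subseteq> insert None (Some ` (P \<times> P))" using IP unfolding B_def bier_carrier_def by auto
  have finB: "finite B" using finite_subset[OF Bsub] finP by auto
  have memB: "Some (x,y) \<in> B \<longleftrightarrow> x \<in> I \<and> y \<in> P \<and> y \<notin> I \<and> le x y" for x y
    unfolding B_def bier_carrier_def by auto
  have NB: "None \<in> B" unfolding B_def bier_carrier_def by auto
  have lBS: "lB (Some (x',y')) (Some (x,y)) \<longleftrightarrow> le x' x \<and> le y y'" for x y x' y'
    unfolding lB_def bier_le_def by simp
  have lBN: "lB a None" for a unfolding lB_def bier_le_def by simp
  have lNS: "\<not> lB None (Some p)" for p unfolding lB_def bier_le_def by (cases p) simp
  have Bcases: "a = None \<or> (\<exists>x y. a = Some (x,y) \<and> x \<in> I \<and> y \<in> P \<and> y \<notin> I \<and> le x y)" if "a \<in> B" for a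
    using that memB by (cases a) auto
  have poB: "is_poset B lB"
    unfolding is_poset_def
  proof (intro conjI ballI impI)
    fix a assume "a \<in> B"
    then show "lB a a" using Bcases[of a] lBN lBS rfl IP by auto
  next
    fix a c assume a: "a \<in> B" and c: "c \<in> B" and ac: "lB a c \<and> lB c a"
    show "a = c"
    proof (cases "a = None \<or> c = None")
      case True
      then show ?thesis using Bcases[OF a] Bcases[OF c] ac lNS by auto
    next
      case False
      then obtain x y x' y' where "a = Some (x,y)" "c = Some (x',y')" "x\<in>P" "y\<in>P" "x'\<in>P" "y'\<in>P"
        using Bcases[OF a] Bcases[OF c] IP by blast
      then show ?thesis using ac lBS asym by auto
    qed
  next
    fix a c d assume a: "a \<in> B" and c: "c \<in> B" and d: "d \<in> B" and acd: "lB a c \<and> lB c d"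
    show "lB a d"
    proof (cases "d = None")
      case True then show ?thesis using lBN by simp
    next
      case False
      then obtain x y where dd: "d = Some (x,y)" "x\<in>P" "y\<in>P" using Bcases[OF d] IP by auto
      then obtain x' y' where cc: "c = Some (x',y')" "x'\<in>P" "y'\<in>P"
        using Bcases[OF c] acd lNS IP by auto
      then obtain x'' y'' where aa: "a = Some (x'',y'')" "x''\<in>P" "y''\<in>P"
        using Bcases[OF a] acd lNS IP by auto
      show ?thesis using dd cc aa acd lBS trn by meson
    qed
  qed
  interpret Bp: fposet B lB using finB poB by unfold_locales
  define rB where "rB = (\<lambda>a. case a of None \<Rightarrow> n | Some (u,v) \<Rightarrow> rank P le u + (n - rank P le v))"
  have rBS: "rB (Some (u,v)) = rank P le u + (n - rank P le v)" for u v unfolding rB_def by simp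
  have rBN: "rB None = n" unfolding rB_def by simp
  define b0 where "b0 = Some (b,t)"
  have b0B: "b0 \<in> B" unfolding b0_def using memB bI tP tI bt by auto
  have b0bot: "\<forall>z\<in>B. lB b0 z"
  proof
    fix z assume "z \<in> B"
    then show "lB b0 z" using Bcases[of z] lBN lBS bt IP unfolding b0_def by auto
  qed
  have rB0: "rB b0 = 0" unfolding b0_def rBS rb n_def by simp
  have rBcov: "\<forall>\<alpha> \<beta>. Bp.covers \<alpha> \<beta> \<longrightarrow> rB \<beta> = Suc (rB \<alpha>)"
  proof (intro allI impI)
    fix \<alpha> \<beta> assume cv: "Bp.covers \<alpha> \<beta>"
    then have aB: "\<alpha> \<in> B" and bB: "\<beta> \<in> B" and ab: "lB \<alpha> \<beta>" "\<alpha> \<noteq> \<beta>"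
      and btw: "\<forall>w\<in>B. lB \<alpha> w \<and> lB w \<beta> \<longrightarrow> w = \<alpha> \<or> w = \<beta>"
      unfolding Bp.covers_def by auto
    have "\<alpha> \<noteq> None"
    proof
      assume "\<alpha> = None"
      then show False using ab lNS by (cases \<beta>) auto
    qed
    then obtain x' y' where aa: "\<alpha> = Some (x',y')" "x' \<in> I" "y' \<in> P" "y' \<notin> I" "le x' y'"
      using Bcases[OF aB] by auto
    have x'P: "x' \<in> P" using aa IP by auto
    show "rB \<beta> = Suc (rB \<alpha>)"
    proof (cases "\<beta> = None")
      case True
      have cxy: "covers x' y'" unfolding covers_def
      proof (intro conjI ballI impI)
        show "x' \<noteq> y'" using aa by auto
        fix w assume w: "w \<in> P" "le x' w \<and> le w y'"
        show "w = x' \<or> w = y'"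
        proof (cases "w \<in> I")
          case True
          then have "Some (w,y') \<in> B" using memB w aa by auto
          moreover have "lB \<alpha> (Some (w,y'))" using aa lBS w rfl by auto
          ultimately have "Some (w,y') = \<alpha> \<or> Some (w,y') = \<beta>" using btw lBN \<open>\<beta> = None\<close> by auto
          then show ?thesis using aa \<open>\<beta> = None\<close> by auto
        next
          case False
          then have "Some (x',w) \<in> B" using memB w aa by auto
          moreover have "lB \<alpha> (Some (x',w))" using aa lBS w rfl x'P by auto
          ultimately have "Some (x',w) = \<alpha> \<or> Some (x',w) = \<beta>" using btw lBN \<open>\<beta> = None\<close> by auto
          then show ?thesis using aa \<open>\<beta> = None\<close> by auto
        qed
      qed (use aa x'P in auto)
      have "rank P le y' = Suc (rank P le x')" using rcov[OF cxy] .
      moreover have "rank P le y' \<le> n" using rle aa by auto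
      ultimately show ?thesis using True aa rBS rBN by simp
    next
      case False
      then obtain x y where bb: "\<beta> = Some (x,y)" "x \<in> I" "y \<in> P" "y \<notin> I" "le x y"
        using Bcases[OF bB] by auto
      have xP: "x \<in> P" using bb IP by auto
      have le1: "le x' x" "le y y'" using ab aa bb lBS by auto
      show ?thesis
      proof (cases "x' = x")
        case True
        have cyy: "covers y y'" unfolding covers_def
        proof (intro conjI ballI impI)
          show "y \<noteq> y'" using aa bb True ab by auto
          fix w assume w: "w \<in> P" "le y w \<and> le w y'"
          have "w \<notin> I" using w Idown bb by auto
          then have "Some (x,w) \<in> B" using memB w bb trn[of x y w] xP by auto
          moreover have "lB \<alpha> (Some (x,w))" using aa lBS w le1 by auto
          moreover have "lB (Some (x,w)) \<beta>" using bb lBS w xP rfl by auto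
          ultimately have "Some (x,w) = \<alpha> \<or> Some (x,w) = \<beta>" using btw by auto
          then show "w = y \<or> w = y'" using aa bb by auto
        qed (use aa bb le1 in auto)
        have "rank P le y' = Suc (rank P le y)" using rcov[OF cyy] .
        moreover have "rank P le y' \<le> n" using rle aa by auto
        ultimately show ?thesis using True aa bb rBS by simp
      next
        case False
        have yy: "y = y'"
        proof (rule ccontr)
          assume ny: "y \<noteq> y'"
          have "Some (x,y') \<in> B" using memB aa bb trn[of x y y'] xP le1 by auto
          moreover have "lB \<alpha> (Some (x,y'))" using aa lBS le1 aa rfl by auto
          moreover have "lB (Some (x,y')) \<beta>" using bb lBS le1 xP rfl by auto
          ultimately have "Some (x,y') = \<alpha> \<or> Some (x,y') = \<beta>" using btw by auto
          then show False using aa bb ny False by auto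
        qed
        have cxx: "covers x' x" unfolding covers_def
        proof (intro conjI ballI impI)
          show "x' \<noteq> x" using False .
          fix w assume w: "w \<in> P" "le x' w \<and> le w x"
          have "w \<in> I" using w Idown bb by auto
          then have "Some (w,y) \<in> B" using memB w bb trn[of w x y] xP by auto
          moreover have "lB \<alpha> (Some (w,y))" using aa lBS w yy rfl by auto
          moreover have "lB (Some (w,y)) \<beta>" using bb lBS w rfl by auto
          ultimately have "Some (w,y) = \<alpha> \<or> Some (w,y) = \<beta>" using btw by auto
          then show "w = x' \<or> w = x" using aa bb by auto
        qed (use x'P xP le1 in auto)
        have "rank P le x = Suc (rank P le x')" using rcov[OF cxx] .
        then show ?thesis using yy aa bb rBS by simp
      qed
    qed
  qed
  have rankB: "rank B lB z = rB z" if "z \<in> B" for z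
    using Bp.rank_eq_r[OF b0B b0bot rB0 rBcov that] .
  have gradedB: "graded B lB"
    unfolding graded_def
  proof (intro conjI allI impI)
    show "is_bounded B lB" unfolding is_bounded_def using b0B b0bot NB lBN by blast
    fix C D assume "maximal_chain B lB C \<and> maximal_chain B lB D"
    then show "card C = card D"
      using Bp.maxchain_card_r[OF b0B b0bot rB0 rBcov NB] lBN by auto
  qed (use finB poB in auto)
  have rBSf: "(-1::int)^(rB (Some (u,v))) = (-1)^n * (f u * f v)" if "v \<in> P" for u v
    unfolding rBS f_def using sign_shift[OF rle[OF that]] by simp
  have eulB: "card {z \<in> closed_interval B lB \<alpha> \<beta>. even (rank B lB z)} =
        card {z \<in> closed_interval B lB \<alpha> \<beta>. odd (rank B lB z)}"
    if aB: "\<alpha> \<in> B" and bB: "\<beta> \<in> B" and ab: "lB \<alpha> \<beta>" "\<alpha> \<noteq> \<beta>" for \<alpha> \<beta>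
  proof -
    let ?S = "closed_interval B lB \<alpha> \<beta>"
    have finS: "finite ?S" using finB unfolding closed_interval_def by simp
    have "(\<Sum>z\<in>?S. (-1::int)^(rank B lB z)) = (\<Sum>z\<in>?S. (-1::int)^(rB z))"
      using rankB unfolding closed_interval_def by (intro sum.cong) auto
    also have "\<dots> = 0"
    proof -
      have "\<alpha> \<noteq> None"
      proof
        assume "\<alpha> = None"
        then show False using ab lNS by (cases \<beta>) auto
      qed
      then obtain x' y' where aa: "\<alpha> = Some (x',y')" "x' \<in> I" "y' \<in> P" "y' \<notin> I" "le x' y'"
        using Bcases[OF aB] by auto
      have x'P: "x' \<in> P" using aa IP by auto
      show ?thesis
      proof (cases "\<beta> = None")
        case True
        define T where "T = {(u,v). u \<in> I \<and> v \<in> P \<and> v \<notin> I \<and> le u v \<and> le x' u \<and> le v y'}"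
        have ci: "?S = insert None (Some ` T)"
        proof (rule set_eqI)
          fix z show "z \<in> ?S \<longleftrightarrow> z \<in> insert None (Some ` T)"
          proof (cases z)
            case None then show ?thesis using NB lBN True unfolding closed_interval_def by auto
          next
            case (Some p)
            then obtain u v where "z = Some (u,v)" by (cases p) auto
            then show ?thesis using True aa memB lBS lBN unfolding closed_interval_def T_def by auto
          qed
        qed
        have TP: "T \<subseteq> P \<times> P" using IP unfolding T_def by auto
        have finT: "finite T" using finite_subset[OF TP] finP by auto
        have "(\<Sum>z\<in>?S. (-1::int)^(rB z)) = (-1)^n + (\<Sum>p\<in>T. (-1::int)^(rB (Some p)))"
          unfolding ci using finT rBN by (simp add: sum.reindex)
        also have "(\<Sum>p\<in>T. (-1::int)^(rB (Some p))) = (\<Sum>p\<in>T. (-1)^n * (f (fst p) * f (snd p)))"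
          using TP rBSf by (intro sum.cong) auto
        also have "\<dots> = (-1)^n * (\<Sum>p\<in>T. f (fst p) * f (snd p))" by (simp add: sum_distrib_left)
        also have "(\<Sum>p\<in>T. f (fst p) * f (snd p)) = -1"
        proof -
          define A where "A = {u\<in>I. le x' u}"
          define Bv where "Bv = (\<lambda>u. {v\<in>P. v \<notin> I \<and> le u v \<and> le v y'})"
          define Cv where "Cv = (\<lambda>u. {v\<in>P. v \<in> I \<and> le u v \<and> le v y'})"
          define A' where "A' = {v\<in>I. le v y'}"
          define Du where "Du = (\<lambda>v. {u\<in>P. le x' u \<and> le u v})"
          have AP: "A \<subseteq> P" "A' \<subseteq> P" using IP unfolding A_def A'_def by auto
          have finA: "finite A" "finite A'" using AP finite_subset finP by auto
          have TS: "T = Sigma A Bv" unfolding T_def A_def Bv_def using IP by auto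
          have "(\<Sum>p\<in>T. f (fst p) * f (snd p)) = (\<Sum>u\<in>A. \<Sum>v\<in>Bv u. f u * f v)"
            unfolding TS using finA finP by (subst sum.Sigma) (auto simp: Bv_def split_beta intro!: sum.cong)
          also have "\<dots> = (\<Sum>u\<in>A. f u * (\<Sum>v\<in>Bv u. f v))" by (simp add: sum_distrib_left)
          also have "\<dots> = (\<Sum>u\<in>A. f u * (- (\<Sum>v\<in>Cv u. f v)))"
          proof (rule sum.cong[OF refl])
            fix u assume uA: "u \<in> A"
            have uP: "u \<in> P" using uA AP by auto
            have "closed_interval P le u y' = Bv u \<union> Cv u"
              unfolding closed_interval_def Bv_def Cv_def by auto
            moreover have "Bv u \<inter> Cv u = {}" unfolding Bv_def Cv_def by auto
            moreover have "finite (Bv u)" "finite (Cv u)" unfolding Bv_def Cv_def using finP by auto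
            ultimately have "(\<Sum>v\<in>Bv u. f v) + (\<Sum>v\<in>Cv u. f v) = (\<Sum>z\<in>closed_interval P le u y'. f z)"
              by (simp add: sum.union_disjoint)
            also have "\<dots> = 0" using sumci[OF uP aa(3)] uA aa A_def by auto
            finally have "(\<Sum>v\<in>Bv u. f v) = - (\<Sum>v\<in>Cv u. f v)" by linarith
            then show "f u * (\<Sum>v\<in>Bv u. f v) = f u * (- (\<Sum>v\<in>Cv u. f v))" by simp
          qed
          also have "\<dots> = - (\<Sum>u\<in>A. \<Sum>v\<in>Cv u. f u * f v)"
            by (simp add: sum_distrib_left sum_negf)
          also have "(\<Sum>u\<in>A. \<Sum>v\<in>Cv u. f u * f v) = (\<Sum>v\<in>A'. \<Sum>u\<in>Du v. f u * f v)"
          proof -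
            have "(\<Sum>u\<in>A. \<Sum>v\<in>Cv u. f u * f v) = (\<Sum>u\<in>P. \<Sum>v\<in>P. if u\<in>A \<and> v\<in>Cv u then f u * f v else 0)"
              by (rule double_sum_if[OF finP AP(1)]) (auto simp: Cv_def)
            also have "\<dots> = (\<Sum>v\<in>P. \<Sum>u\<in>P. if u\<in>A \<and> v\<in>Cv u then f u * f v else 0)"
              by (rule sum.swap)
            also have "\<dots> = (\<Sum>v\<in>P. \<Sum>u\<in>P. if v\<in>A' \<and> u\<in>Du v then f u * f v else 0)"
            proof (intro sum.cong refl)
              fix v u assume "v \<in> P" "u \<in> P"
              then have "(u\<in>A \<and> v\<in>Cv u) = (v\<in>A' \<and> u\<in>Du v)"
                unfolding A_def Cv_def A'_def Du_def using Idown by auto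
              then show "(if u\<in>A \<and> v\<in>Cv u then f u * f v else 0) = (if v\<in>A' \<and> u\<in>Du v then f u * f v else 0)"
                by simp
            qed
            also have "\<dots> = (\<Sum>v\<in>A'. \<Sum>u\<in>Du v. f u * f v)"
              by (rule double_sum_if[OF finP AP(2), symmetric]) (auto simp: Du_def)
            finally show ?thesis .
          qed
          also have "(\<Sum>v\<in>A'. \<Sum>u\<in>Du v. f u * f v) = (\<Sum>v\<in>A'. if v = x' then f x' * f x' else 0)"
          proof (rule sum.cong[OF refl])
            fix v assume vA: "v \<in> A'"
            have vP: "v \<in> P" using vA AP by auto
            have Dv: "Du v = closed_interval P le x' v" unfolding Du_def closed_interval_def by auto
            have "(\<Sum>u\<in>Du v. f u * f v) = (\<Sum>u\<in>Du v. f u) * f v" by (simp add: sum_distrib_right)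
            also have "\<dots> = (if x' = v then f x' else 0) * f v"
              using sumci[OF x'P vP] Dv by simp
            finally show "(\<Sum>u\<in>Du v. f u * f v) = (if v = x' then f x' * f x' else 0)" by auto
          qed
          also have "\<dots> = f x' * f x'" using finA aa unfolding A'_def by simp
          also have "\<dots> = 1" using ff .
          finally show ?thesis by simp
        qed
        finally show ?thesis by simp
      next
        case False
        then obtain x y where bb: "\<beta> = Some (x,y)" "x \<in> I" "y \<in> P" "y \<notin> I" "le x y"
          using Bcases[OF bB] by auto
        have xP: "x \<in> P" using bb IP by auto
        have le1: "le x' x" "le y y'" using ab aa bb lBS by auto
        let ?X = "closed_interval P le x' x" and ?Y = "closed_interval P le y y'"
        have ci: "?S = Some ` (?X \<times> ?Y)"
        proof (rule set_eqI)
          fix z show "z \<in> ?S \<longleftrightarrow> z \<in> Some ` (?X \<times> ?Y)"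
          proof (cases z)
            case None then show ?thesis using lNS bb unfolding closed_interval_def by auto
          next
            case (Some p)
            then obtain u v where z: "z = Some (u,v)" by (cases p) auto
            show ?thesis
            proof
              assume "z \<in> ?S"
              then show "z \<in> Some ` (?X \<times> ?Y)" using z aa bb memB lBS IP
                unfolding closed_interval_def by auto
            next
              assume "z \<in> Some ` (?X \<times> ?Y)"
              then have uv: "u \<in> P" "v \<in> P" "le x' u" "le u x" "le y v" "le v y'"
                using z unfolding closed_interval_def by auto
              have "u \<in> I" using uv Idown bb by auto
              moreover have "v \<notin> I" using uv Idown bb by auto
              moreover have "le u v" using uv trn[of u x y] trn[of u y v] xP bb by blast
              ultimately have "z \<in> B" using z memB uv by auto
              then show "z \<in> ?S" using z uv lBS aa bb unfolding closed_interval_def by auto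
            qed
          qed
        qed
        have XP: "?X \<subseteq> P" and YP: "?Y \<subseteq> P" unfolding closed_interval_def by auto
        have finXY: "finite ?X" "finite ?Y" using XP YP finite_subset finP by auto
        have "(\<Sum>z\<in>?S. (-1::int)^(rB z)) = (\<Sum>p\<in>?X \<times> ?Y. (-1::int)^(rB (Some p)))"
          unfolding ci by (simp add: sum.reindex)
        also have "\<dots> = (\<Sum>p\<in>?X \<times> ?Y. (-1)^n * (f (fst p) * f (snd p)))"
          using YP rBSf by (intro sum.cong) auto
        also have "\<dots> = (-1)^n * (\<Sum>p\<in>?X \<times> ?Y. f (fst p) * f (snd p))"
          by (simp add: sum_distrib_left)
        also have "(\<Sum>p\<in>?X \<times> ?Y. f (fst p) * f (snd p)) = ((\<Sum>u\<in>?X. f u) * (\<Sum>v\<in>?Y. f v))"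
          unfolding sum_product sum.cartesian_product by (rule sum.cong) auto
        also have "(\<Sum>u\<in>?X. f u) * (\<Sum>v\<in>?Y. f v) = 0"
          using sumci[OF x'P xP] sumci[OF bb(3) aa(3)] ab aa bb by auto
        finally show ?thesis by simp
      qed
    qed
    finally show ?thesis using card_even_odd[OF finS, of "rank B lB"] by simp
  qed
  show ?thesis unfolding eulerian_def B_def[symmetric] lB_def[symmetric]
    using gradedB eulB by blast
qed
end
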